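(* Let $p\geq 2$ be an even integer and let $U_p=\bigcup_{n\in 2\mathbb Z_+}\mathbb Z_p^n$. Let $\boldsymbol a,\boldsymbol b\in U_p$ be equivalent (in the sense defined in the context). Then $\varepsilon_p(\boldsymbol a)=\varepsilon_p(\boldsymbol b)$.
   Context: $\mathbb Z_+$ denotes the positive integers and $\mathbb Z_p=\mathbb Z/p\mathbb Z$. Two elements of $U_p$ are called equivalent if they are related by a finite sequence of the following transformations of $(a_1,\ldots,a_n)\in\mathbb Z_p^n$ ($n$ even): (Op1) $(a_1,\ldots,a_n)\to(a_2,\ldots,a_n,a_1)$; (Op2) $(a_1,\ldots,a_n)\to(a, a_2+(-1)^2(a_1-a),\ldots,a_i+(-1)^i(a_1-a),\ldots,a_n+(-1)^n(a_1-a))$ for any $a\in\mathbb Z_p$; (Op3) $(a_1,\ldots,a_n)\to(a, a_1-a_2+a,\ldots,a_1-a_i+a,\ldots,a_1-a_n+a)$ for any $a\in\mathbb Z_p$; (Op4) $(a_1,\ldots,a_n)\to(a_1,-a_1+a_2+a_3,a_3,\ldots,a_n)$ when $n>3$. For $p$ even, parity of elements of $\mathbb Z_p$ is well defined, and $\varepsilon_p:U_p\to\mathbb Z\cup\{\infty\}$ is defined by $\varepsilon_p(a_1,\ldots,a_n)=0$ if $a_1+a_2\equiv a_2+a_3\equiv\cdots\equiv a_n+a_1\equiv 0\pmod 2$, $=1$ if $a_1+a_2\equiv\cdots\equiv a_n+a_1\equiv 1\pmod 2$, and $=\infty$ otherwise. *)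

theory Defs
  imports Main "HOL-Library.Extended_Nat"
begin

text \<open>Elements of Z_p are represented by their canonical representatives in {0..<p};
  a tuple (a_1,...,a_n) is the list [a_1,...,a_n] (0-indexed: a_i = xs ! (i-1)).\<close>

definition U :: "int \<Rightarrow> int list set" where
  "U p = {xs. 0 < length xs \<and> even (length xs) \<and> set xs \<subseteq> {0..<p}}"

definition op1 :: "int list \<Rightarrow> int list" where
  "op1 xs = rotate1 xs"

definition op2 :: "int \<Rightarrow> int \<Rightarrow> int list \<Rightarrow> int list" where
  "op2 p a xs = map (\<lambda>j. if j = 0 then a mod p
       else (xs ! j + (-1) ^ (j + 1) * (xs ! 0 - a)) mod p) [0..<length xs]"

definition op3 :: "int \<Rightarrow> int \<Rightarrow> int list \<Rightarrow> int list" where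
  "op3 p a xs = map (\<lambda>j. if j = 0 then a mod p
       else (xs ! 0 - xs ! j + a) mod p) [0..<length xs]"

definition op4 :: "int \<Rightarrow> int list \<Rightarrow> int list" where
  "op4 p xs = xs[1 := (- xs ! 0 + xs ! 1 + xs ! 2) mod p]"

definition step :: "int \<Rightarrow> int list \<Rightarrow> int list \<Rightarrow> bool" where
  "step p xs ys \<longleftrightarrow> xs \<in> U p \<and>
     (ys = op1 xs
      \<or> (\<exists>a\<in>{0..<p}. ys = op2 p a xs)
      \<or> (\<exists>a\<in>{0..<p}. ys = op3 p a xs)
      \<or> (length xs > 3 \<and> ys = op4 p xs))"

definition equiv_U :: "int \<Rightarrow> int list \<Rightarrow> int list \<Rightarrow> bool" where
  "equiv_U p xs ys \<longleftrightarrow> (symclp (step p))\<^sup>*\<^sup>* xs ys"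

definition eps :: "int list \<Rightarrow> enat" where
  "eps xs =
    (if \<forall>i<length xs. even (xs ! i + xs ! ((i + 1) mod length xs)) then 0
     else if \<forall>i<length xs. odd (xs ! i + xs ! ((i + 1) mod length xs)) then 1
     else \<infinity>)"

end

theory Submission
  imports Defs
begin

definition E :: "int list \<Rightarrow> nat \<Rightarrow> bool" where
  "E xs i = even (xs ! i + xs ! ((i + 1) mod length xs))"

lemma eps_alt: "eps xs = (if \<forall>i<length xs. E xs i then 0
     else if \<forall>i<length xs. \<not> E xs i then 1 else \<infinity>)"
  unfolding eps_def E_def by simp

lemma eps_cong2:
  assumes "length ys = length xs"
    "(\<forall>i<length ys. E ys i) \<longleftrightarrow> (\<forall>i<length xs. E xs i)"
    "(\<forall>i<length ys. \<not> E ys i) \<longleftrightarrow> (\<forall>i<length xs. \<not> E xs i)"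
  shows "eps ys = eps xs"
  using assms unfolding eps_alt by simp

lemma eps_cong_shift:
  assumes "length ys = length xs" "\<And>j. j < length xs \<Longrightarrow> even (ys ! j - xs ! j - c)"
  shows "eps ys = eps xs"
proof (rule eps_cong2)
  have "E ys i = E xs i" if "i < length xs" for i
  proof -
    have "(i + 1) mod length xs < length xs" using that by (metis gr_zeroI less_zeroE mod_less_divisor)
    then have "even (ys ! ((i + 1) mod length xs) - xs ! ((i + 1) mod length xs) - c)"
      using assms(2) by blast
    moreover have "even (ys ! i - xs ! i - c)" using assms(2) that by blast
    ultimately show ?thesis unfolding E_def using assms(1)
      by (smt (verit, ccfv_threshold) even_add)
  qed
  then show "(\<forall>i<length ys. E ys i) \<longleftrightarrow> (\<forall>i<length xs. E xs i)"
    "(\<forall>i<length ys. \<not> E ys i) \<longleftrightarrow> (\<forall>i<length xs. \<not> E xs i)"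
    using assms(1) by auto
qed (use assms in auto)

lemma even_mod_p: "even (p::int) \<Longrightarrow> even (x mod p) \<longleftrightarrow> even x"
  by (metis dvd_mod_iff)

lemma op1_eps:
  assumes "xs \<noteq> []" shows "eps (op1 xs) = eps xs"
proof -
  let ?n = "length xs"
  have n: "?n > 0" using assms by simp
  have L: "length (op1 xs) = ?n" by (simp add: op1_def)
  have nth: "op1 xs ! i = xs ! ((i+1) mod ?n)" if "i < ?n" for i
    using that by (simp add: op1_def nth_rotate1)
  have Ei: "E (op1 xs) i = E xs ((i+1) mod ?n)" if "i < ?n" for i
  proof -
    have "(i+1) mod ?n < ?n" using n by simp
    then show ?thesis unfolding E_def L using nth that
      by (simp add: mod_Suc_eq)
  qed
  have all: "(\<forall>i<?n. P ((i+1) mod ?n)) \<longleftrightarrow> (\<forall>i<?n. P i)" for P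
  proof
    assume h: "\<forall>i<?n. P ((i+1) mod ?n)"
    show "\<forall>i<?n. P i"
    proof (intro allI impI)
      fix i assume i: "i < ?n"
      show "P i"
      proof (cases i)
        case 0
        then show ?thesis using h[rule_format, of "?n - 1"] n by simp
      next
        case (Suc k)
        then show ?thesis using h[rule_format, of k] i by simp
      qed
    qed
  next
    assume "\<forall>i<?n. P i" then show "\<forall>i<?n. P ((i+1) mod ?n)" using n by simp
  qed
  show ?thesis
  proof (rule eps_cong2)
    show "(\<forall>i<length (op1 xs). E (op1 xs) i) = (\<forall>i<?n. E xs i)"
      using all[of "E xs"] Ei L by simp
    show "(\<forall>i<length (op1 xs). \<not> E (op1 xs) i) = (\<forall>i<?n. \<not> E xs i)"
      using all[of "\<lambda>i. \<not> E xs i"] Ei L by simp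
  qed (simp add: L)
qed

lemma op2_eps:
  assumes "xs \<noteq> []" "even p" shows "eps (op2 p a xs) = eps xs"
proof (rule eps_cong_shift[where c = "xs ! 0 - a"])
  show "length (op2 p a xs) = length xs" by (simp add: op2_def)
  fix j assume j: "j < length xs"
  show "even (op2 p a xs ! j - xs ! j - (xs ! 0 - a))"
  proof (cases "j = 0")
    case True
    then show ?thesis using j assms(2) even_mod_p[OF assms(2), of a]
      by (simp add: op2_def)
  next
    case False
    have "even ((-1::int) ^ (j+1) * (xs ! 0 - a) - (xs ! 0 - a))"
      by (simp add: minus_one_power_iff)
    then show ?thesis using j False even_mod_p[OF assms(2), of "xs ! j + (-1) ^ (j + 1) * (xs ! 0 - a)"]
      by (simp add: op2_def) blast
  qed
qed

lemma op3_eps: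
  assumes "xs \<noteq> []" "even p" shows "eps (op3 p a xs) = eps xs"
proof (rule eps_cong_shift[where c = "xs ! 0 + a"])
  show "length (op3 p a xs) = length xs" by (simp add: op3_def)
  fix j assume j: "j < length xs"
  show "even (op3 p a xs ! j - xs ! j - (xs ! 0 + a))"
  proof (cases "j = 0")
    case True
    then show ?thesis using j assms(2) even_mod_p[OF assms(2), of a]
      by (simp add: op3_def)
  next
    case False
    then show ?thesis using j False even_mod_p[OF assms(2), of "xs ! 0 - xs ! j + a"]
      by (simp add: op3_def) blast
  qed
qed

lemma op4_eps:
  assumes "length xs > 3" "even p" shows "eps (op4 p xs) = eps xs"
proof -
  let ?n = "length xs"
  let ?y = "op4 p xs"
  have L: "length ?y = ?n" by (simp add: op4_def)
  have y1: "even (?y ! 1) \<longleftrightarrow> even (- xs ! 0 + xs ! 1 + xs ! 2)"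
    using assms by (simp add: op4_def even_mod_p)
  have yo: "?y ! k = xs ! k" if "k \<noteq> 1" for k
    using that by (simp add: op4_def)
  have E0: "E ?y 0 = E xs 1" using assms y1 yo[of 0] yo[of 2]
    unfolding E_def L by (simp add: numeral_2_eq_2) presburger
  have E1: "E ?y 1 = E xs 0" using assms y1 yo[of 0] yo[of 2]
    unfolding E_def L by (simp add: numeral_2_eq_2) presburger
  have Ek: "E ?y k = E xs k" if "2 \<le> k" "k < ?n" for k
  proof -
    have "(k+1) mod ?n \<noteq> 1"
    proof (cases "k + 1 = ?n")
      case True then show ?thesis using assms by simp
    next
      case False then show ?thesis using that by simp
    qed
    then show ?thesis unfolding E_def L using yo that by simp
  qed
  have all: "(\<forall>i<?n. P i) \<longleftrightarrow> P 0 \<and> P 1 \<and> (\<forall>i<?n. 2 \<le> i \<longrightarrow> P i)" for P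
    using assms by (metis One_nat_def Suc_lessD less_2_cases not_le numeral_3_eq_3 pos2 less_trans_Suc)
  show ?thesis
  proof (rule eps_cong2)
    show "(\<forall>i<length ?y. E ?y i) = (\<forall>i<?n. E xs i)"
      unfolding L all[of "E ?y"] all[of "E xs"] using E0 E1 Ek by auto
    show "(\<forall>i<length ?y. \<not> E ?y i) = (\<forall>i<?n. \<not> E xs i)"
      unfolding L all[of "\<lambda>i. \<not> E ?y i"] all[of "\<lambda>i. \<not> E xs i"] using E0 E1 Ek by auto
  qed (simp add: L)
qed

lemma step_eps:
  assumes "even p" "step p xs ys" shows "eps xs = eps ys"
proof -
  have ne: "xs \<noteq> []" using assms(2) by (auto simp: step_def U_def)
  show ?thesis using assms(2) op1_eps[OF ne] op2_eps[OF ne assms(1)] op3_eps[OF ne assms(1)]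
      op4_eps[OF _ assms(1)]
    unfolding step_def by metis
qed

theorem mainTheorem2:
  fixes p :: int and a b :: "int list"
  assumes "p \<ge> 2" and "even p"
    and "a \<in> U p" and "b \<in> U p"
    and "equiv_U p a b"
  shows "eps a = eps b"
proof -
  have "(symclp (step p))\<^sup>*\<^sup>* a b" using assms(5) by (simp add: equiv_U_def)
  then show ?thesis
  proof (induction rule: rtranclp_induct)
    case (step y z)
    then show ?case using step_eps[OF assms(2)] by (metis symclp_def)
  qed simp
qed

end
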